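(* Let $(K,\delta)$ be a differential field of characteristic zero and $x\in K$ with $\delta(x)=1$, and let $f\in K$. (i) Let $n$ be a positive integer. Then $f=\delta^n(g)$ for some $g\in K$ if and only if for every $i$ with $0\le i\le n-1$ there exists $h_i\in K$ with $x^if=\delta(h_i)$. (ii) $f$ is stable in $(K,\delta)$ if and only if for every $i\in\mathbb{N}$ there exists $g_i\in K$ with $x^if=\delta(g_i)$.
   Context: A differential field $(K,\delta)$ is a field with an additive map $\delta$ satisfying $\delta(fg)=f\delta(g)+g\delta(f)$. An element $f\in K$ is stable in $(K,\delta)$ if there is a sequence $(a_i)_{i\ge0}$ in $K$ with $a_0=f$ and $\delta(a_{i+1})=a_i$ for all $i\in\mathbb{N}$. *)

theory Defs
  imports Main
begin

definition derivation :: "('a::field \<Rightarrow> 'a) \<Rightarrow> bool" where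
  "derivation \<delta> \<longleftrightarrow> (\<forall>f g. \<delta> (f + g) = \<delta> f + \<delta> g) \<and>
                      (\<forall>f g. \<delta> (f * g) = f * \<delta> g + g * \<delta> f)"

definition stable :: "('a::field \<Rightarrow> 'a) \<Rightarrow> 'a \<Rightarrow> bool" where
  "stable \<delta> f \<longleftrightarrow> (\<exists>a :: nat \<Rightarrow> 'a. a 0 = f \<and> (\<forall>i. \<delta> (a (Suc i)) = a i))"

end

theory Submission
  imports Defs
begin

locale dfx =
  fixes \<delta> :: "'a::field_char_0 \<Rightarrow> 'a" and x :: 'a
  assumes der: "derivation \<delta>" and dx: "\<delta> x = 1"
begin

lemma add: "\<delta> (a + b) = \<delta> a + \<delta> b" using der unfolding derivation_def by blast
lemma mult: "\<delta> (a * b) = a * \<delta> b + b * \<delta> a" using der unfolding derivation_def by blast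
lemma zero: "\<delta> 0 = 0" using add[of 0 0] by simp
lemma minus: "\<delta> (- a) = - \<delta> a" using add[of a "-a"] zero by (simp add: add_eq_0_iff2)
lemma diff: "\<delta> (a - b) = \<delta> a - \<delta> b" using add[of a "-b"] minus[of b] by simp
lemma natmul: "\<delta> (of_nat k * a) = of_nat k * \<delta> a"
  by (induction k) (simp_all add: zero add distrib_right)
lemma natdiv: assumes "k \<noteq> 0" shows "\<delta> (a / of_nat k) = \<delta> a / of_nat k"
proof -
  have "\<delta> a = \<delta> (of_nat k * (a / of_nat k))" using assms by simp
  also have "\<dots> = of_nat k * \<delta> (a / of_nat k)" by (rule natmul)
  finally show ?thesis using assms by (simp add: field_simps)
qed
lemma dpow: "\<delta> (x ^ Suc k) = of_nat (Suc k) * x ^ k"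
proof (induction k)
  case 0 then show ?case using dx by simp
next
  case (Suc k)
  have "\<delta> (x ^ Suc (Suc k)) = \<delta> (x * x ^ Suc k)" by simp
  also have "\<dots> = x * (of_nat (Suc k) * x ^ k) + x ^ Suc k" using Suc mult dx by simp
  also have "\<dots> = of_nat (Suc (Suc k)) * x ^ Suc k" by (simp add: algebra_simps)
  finally show ?case .
qed

lemma parts: "x ^ Suc j * \<delta> u = \<delta> (x ^ Suc j * u) - of_nat (Suc j) * (x ^ j * u)"
  using mult[of "x ^ Suc j" u] dpow[of j] by (simp add: algebra_simps)

lemma back_step:
  assumes "x ^ Suc j * \<delta> h0 = \<delta> h" shows "\<exists>w. x ^ j * h0 = \<delta> w"
proof -
  have e: "of_nat (Suc j) * (x ^ j * h0) = \<delta> (x ^ Suc j * h0 - h)"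
  proof -
    have "of_nat (Suc j) * (x ^ j * h0) = \<delta> (x ^ Suc j * h0) - x ^ Suc j * \<delta> h0"
      using parts[of j h0] by (simp only: eq_diff_eq) (simp add: algebra_simps)
    then show ?thesis using assms diff by simp
  qed
  define w where "w = x ^ Suc j * h0 - h"
  have c: "(of_nat (Suc j)::'a) \<noteq> 0" by (rule of_nat_neq_0)
  have "x ^ j * h0 = \<delta> w / of_nat (Suc j)"
    using e c unfolding w_def[symmetric] by (simp add: eq_divide_eq mult.commute del: of_nat_Suc)
  also have "\<dots> = \<delta> (w / of_nat (Suc j))" using natdiv[of "Suc j" w] by simp
  finally have "x ^ j * h0 = \<delta> (w / of_nat (Suc j))" .
  then show ?thesis by blast
qed

lemma fwd: "i < m \<Longrightarrow> \<exists>h. x ^ i * (\<delta> ^^ m) g = \<delta> h"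
proof (induction i arbitrary: m)
  case 0
  then obtain m' where m: "m = Suc m'" by (cases m) auto
  show ?case by (auto simp add: m)
next
  case (Suc i)
  then obtain m' where m: "m = Suc m'" and im: "i < m'" by (cases m) auto
  obtain w where w: "x ^ i * (\<delta> ^^ m') g = \<delta> w" using Suc.IH im by blast
  have "x ^ Suc i * (\<delta> ^^ m) g = x ^ Suc i * \<delta> ((\<delta> ^^ m') g)" by (simp add: m)
  also have "\<dots> = \<delta> (x ^ Suc i * (\<delta> ^^ m') g) - of_nat (Suc i) * \<delta> w"
    using parts w by simp
  also have "\<dots> = \<delta> (x ^ Suc i * (\<delta> ^^ m') g - of_nat (Suc i) * w)"
    using diff natmul[of "Suc i" w] by (simp del: of_nat_Suc)
  finally show ?case by blast
qed

lemma bwd: "(\<forall>i<n. \<exists>h. x ^ i * f = \<delta> h) \<Longrightarrow> \<exists>g. f = (\<delta> ^^ n) g"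
proof (induction n arbitrary: f)
  case 0 then show ?case by auto
next
  case (Suc n)
  obtain h0 where h0: "f = \<delta> h0" using Suc.prems by fastforce
  have "\<forall>j<n. \<exists>w. x ^ j * h0 = \<delta> w"
  proof (intro allI impI)
    fix j assume "j < n"
    then obtain h where "x ^ Suc j * f = \<delta> h" using Suc.prems by blast
    then show "\<exists>w. x ^ j * h0 = \<delta> w" using back_step h0 by blast
  qed
  then obtain g where "h0 = (\<delta> ^^ n) g" using Suc.IH by blast
  then show ?case using h0 by auto
qed

definition S where "S = {u. \<forall>i. \<exists>g. x ^ i * u = \<delta> g}"

lemma S_step: "u \<in> S \<Longrightarrow> \<exists>v\<in>S. \<delta> v = u"
proof -
  assume u: "u \<in> S"
  have "\<exists>g. x ^ 0 * u = \<delta> g" using u unfolding S_def by blast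
  then obtain h0 where h0: "u = \<delta> h0" by auto
  have "h0 \<in> S" unfolding S_def
  proof (intro CollectI allI)
    fix j
    obtain h where "x ^ Suc j * u = \<delta> h" using u unfolding S_def by blast
    then have "x ^ Suc j * \<delta> h0 = \<delta> h" using h0 by simp
    then show "\<exists>w. x ^ j * h0 = \<delta> w" by (rule back_step)
  qed
  then show ?thesis using h0 by blast
qed

lemma stable_iff: "stable \<delta> f \<longleftrightarrow> (\<forall>i::nat. \<exists>g. x ^ i * f = \<delta> g)"
proof
  assume "stable \<delta> f"
  then obtain a where a0: "a 0 = f" and as: "\<forall>i. \<delta> (a (Suc i)) = a i"
    unfolding stable_def by blast
  have p: "f = (\<delta> ^^ n) (a n)" for n
  proof (induction n)
    case 0 then show ?case using a0 by simp
  next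
    case (Suc n) then show ?case using as by (simp add: funpow_Suc_right del: funpow.simps)
  qed
  show "\<forall>i. \<exists>g. x ^ i * f = \<delta> g"
  proof
    fix i
    have "\<exists>h. x ^ i * (\<delta> ^^ Suc i) (a (Suc i)) = \<delta> h" using fwd[of i "Suc i"] by blast
    then show "\<exists>g. x ^ i * f = \<delta> g" using p[of "Suc i"] by simp
  qed
next
  assume "\<forall>i. \<exists>g. x ^ i * f = \<delta> g"
  then have fS: "f \<in> S" unfolding S_def by blast
  define nx where "nx = (\<lambda>u. SOME v. v \<in> S \<and> \<delta> v = u)"
  have nx: "u \<in> S \<Longrightarrow> nx u \<in> S \<and> \<delta> (nx u) = u" for u
  proof -
    assume "u \<in> S"
    then have "\<exists>v. v \<in> S \<and> \<delta> v = u" using S_step[of u] by blast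
    then show ?thesis unfolding nx_def by (rule someI_ex)
  qed
  define a where "a n = (nx ^^ n) f" for n
  have aSuc: "a (Suc n) = nx (a n)" for n unfolding a_def by simp
  have aS: "a n \<in> S" for n
  proof (induction n)
    case 0 then show ?case using fS by (simp add: a_def)
  next
    case (Suc n) then show ?case unfolding aSuc using nx by blast
  qed
  have d: "\<forall>i. \<delta> (a (Suc i)) = a i"
  proof
    fix i show "\<delta> (a (Suc i)) = a i" unfolding aSuc using nx[OF aS[of i]] by blast
  qed
  have z: "a 0 = f" by (simp add: a_def)
  have "a 0 = f \<and> (\<forall>i. \<delta> (a (Suc i)) = a i)" using z d by (rule conjI)
  then show "stable \<delta> f" unfolding stable_def by (rule exI[of _ a])
qed

end

theorem lemma2p10:
  fixes \<delta> :: "'a::field_char_0 \<Rightarrow> 'a" and x f :: 'a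
  assumes "derivation \<delta>" and "\<delta> x = 1"
  shows "(\<forall>n::nat. n \<ge> 1 \<longrightarrow>
            ((\<exists>g. f = (\<delta> ^^ n) g) \<longleftrightarrow> (\<forall>i<n. \<exists>h. x ^ i * f = \<delta> h)))
       \<and> (stable \<delta> f \<longleftrightarrow> (\<forall>i::nat. \<exists>g. x ^ i * f = \<delta> g))"
proof -
  interpret dfx \<delta> x using assms by unfold_locales
  have A: "(\<exists>g. f = (\<delta> ^^ n) g) \<longleftrightarrow> (\<forall>i<n. \<exists>h. x ^ i * f = \<delta> h)" for n
  proof
    assume "\<exists>g. f = (\<delta> ^^ n) g"
    then obtain g where g: "f = (\<delta> ^^ n) g" by blast
    show "\<forall>i<n. \<exists>h. x ^ i * f = \<delta> h" unfolding g using fwd by blast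
  next
    assume "\<forall>i<n. \<exists>h. x ^ i * f = \<delta> h"
    then show "\<exists>g. f = (\<delta> ^^ n) g" by (rule bwd)
  qed
  show ?thesis
  proof (intro conjI allI impI)
    fix n :: nat
    show "(\<exists>g. f = (\<delta> ^^ n) g) \<longleftrightarrow> (\<forall>i<n. \<exists>h. x ^ i * f = \<delta> h)" by (rule A)
  next
    show "stable \<delta> f \<longleftrightarrow> (\<forall>i::nat. \<exists>g. x ^ i * f = \<delta> g)" by (rule stable_iff)
  qed
qed

end
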